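(* Let $n,t\ge 0$ be integers with $n\ge 3t+1$, let $k=\lfloor t/5\rfloor+1$, and let $\mathcal P=[1:n-t]$. Let $E:\mathcal P\times\mathcal P\to\{0,1\}$ be symmetric ($E_{i,j}=E_{j,i}$; loops $E_{i,i}=1$ are allowed and count as edges). Let $i^\star\in\mathcal P$ and suppose there is a set $\mathcal C\subseteq\mathcal P\setminus\{i^\star\}$ such that $E_{i,i^\star}=1$ for all $i\in\mathcal C$, $\sum_{j\in\mathcal P}E_{i,j}\ge n-2t$ for all $i\in\mathcal C$, and $|\mathcal C|\ge n-2t-1$. Let $\mathcal D=\{i\in\mathcal P\setminus\{i^\star\}: \sum_{j\in\mathcal C}E_{i,j}\ge k\}$. Then $|\mathcal D|\ge n-9t/4-1$. *)

theory Defs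
  imports Complex_Main
begin

end

theory Submission
  imports Defs
begin

lemma arith_core:
  fixes a d m B K t :: real
  assumes "m \<ge> a" "d \<ge> 0" "B = a + t" "5 * K \<le> t" "t \<le> a" "K \<ge> 0"
    and main: "m * a \<le> d * m + (B - d) * K"
  shows "d \<ge> a - t / 4"
proof (rule ccontr)
  assume "\<not> ?thesis"
  hence ad: "a - d > t / 4" by simp
  have "m * (a - d) \<le> (B - d) * K" using main by (simp add: algebra_simps)
  moreover have "a * (a - d) \<le> m * (a - d)" using assms(1) ad assms
    by (intro mult_right_mono) auto
  ultimately have "a * (a - d) \<le> (a - d + t) * K" using assms(3) by (simp add: algebra_simps)
  hence h: "(a - d) * (a - K) \<le> t * K" by (simp add: algebra_simps)
  have "(a - d) * (4 * K) \<le> (a - d) * (a - K)" using ad assms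
    by (intro mult_left_mono) auto
  with h have h2: "(a - d) * (4 * K) \<le> t * K" by linarith
  show False
  proof (cases "K = 0")
    case True
    with h have "(a - d) * a \<le> 0" by simp
    moreover have "a > 0" using ad assms by linarith
    moreover have "(a - d) * a > 0" using ad \<open>a > 0\<close> assms(2) assms(4) assms(6)
      by (intro mult_pos_pos) linarith+
    ultimately show False by linarith
  next
    case False
    hence "K > 0" using assms by simp
    have "(4 * (a - d)) * K \<le> t * K" using h2 by (simp add: algebra_simps)
    hence "4 * (a - d) \<le> t" using \<open>K > 0\<close> by simp
    moreover have "t < 4 * (a - d)" using ad by (simp add: field_simps)
    ultimately show False by simp
  qed
qed

theorem lemma8:
  fixes n t :: nat and E :: "nat \<Rightarrow> nat \<Rightarrow> nat" and istar :: nat and C :: "nat set"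
  assumes hn: "n \<ge> 3 * t + 1"
    and E01: "\<And>i j. i \<in> {1..n - t} \<Longrightarrow> j \<in> {1..n - t} \<Longrightarrow> E i j \<in> {0, 1}"
    and Esym: "\<And>i j. i \<in> {1..n - t} \<Longrightarrow> j \<in> {1..n - t} \<Longrightarrow> E i j = E j i"
    and istar: "istar \<in> {1..n - t}"
    and Csub: "C \<subseteq> {1..n - t} - {istar}"
    and Cadj: "\<And>i. i \<in> C \<Longrightarrow> E i istar = 1"
    and Cdeg: "\<And>i. i \<in> C \<Longrightarrow> (\<Sum>j\<in>{1..n - t}. E i j) \<ge> n - 2 * t"
    and Ccard: "card C \<ge> n - 2 * t - 1"
  shows "real (card {i \<in> {1..n - t} - {istar}. (\<Sum>j\<in>C. E i j) \<ge> t div 5 + 1})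
           \<ge> real n - 9 * real t / 4 - 1"
proof -
  define P where "P = {1..n - t} - {istar}"
  define D where "D = {i \<in> P. (\<Sum>j\<in>C. E i j) \<ge> t div 5 + 1}"
  define K where "K = t div 5"
  define m where "m = card C"
  define a where "a = n - 2 * t - 1"
  have finP: "finite P" unfolding P_def by simp
  have cardP: "card P = n - t - 1" unfolding P_def using istar by simp
  have CP: "C \<subseteq> P" using Csub unfolding P_def by simp
  have finC: "finite C" using CP finP finite_subset by blast
  have DP: "D \<subseteq> P" unfolding D_def by auto
  have finD: "finite D" using DP finP finite_subset by blast
  define S where "S = (\<Sum>j\<in>P. \<Sum>i\<in>C. E j i)"
  have lower: "m * a \<le> S"
  proof -
    have "\<And>i. i \<in> C \<Longrightarrow> a \<le> (\<Sum>j\<in>P. E i j)"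
    proof -
      fix i assume iC: "i \<in> C"
      have ii: "i \<in> {1..n - t}" using iC Csub by auto
      have "(\<Sum>j\<in>{1..n - t}. E i j) = E i istar + (\<Sum>j\<in>P. E i j)"
        unfolding P_def by (rule sum.remove) (use istar in auto)
      thus "a \<le> (\<Sum>j\<in>P. E i j)" using Cdeg[OF iC] Cadj[OF iC] unfolding a_def by simp
    qed
    hence "(\<Sum>i\<in>C. a) \<le> (\<Sum>i\<in>C. \<Sum>j\<in>P. E i j)" by (rule sum_mono)
    also have "\<dots> = (\<Sum>j\<in>P. \<Sum>i\<in>C. E i j)" by (rule sum.swap)
    also have "\<dots> = S" unfolding S_def
      apply (rule sum.cong, simp, rule sum.cong, simp)
      using Esym CP unfolding P_def by auto
    finally show ?thesis unfolding m_def by (simp add: mult.commute)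
  qed
  have upper: "S \<le> card D * m + (card P - card D) * K"
  proof -
    have "S = (\<Sum>j\<in>D. \<Sum>i\<in>C. E j i) + (\<Sum>j\<in>P - D. \<Sum>i\<in>C. E j i)"
      unfolding S_def using finP DP by (metis sum.subset_diff add.commute)
    moreover have "(\<Sum>j\<in>D. \<Sum>i\<in>C. E j i) \<le> (\<Sum>j\<in>D. m)"
    proof (rule sum_mono)
      fix j assume "j \<in> D"
      hence jP: "j \<in> {1..n-t}" using DP unfolding P_def by auto
      have "(\<Sum>i\<in>C. E j i) \<le> (\<Sum>i\<in>C. 1)"
      proof (rule sum_mono)
        fix i assume "i \<in> C" hence "i \<in> {1..n-t}" using Csub by auto
        thus "E j i \<le> 1" using E01[OF jP] by fastforce
      qed
      thus "(\<Sum>i\<in>C. E j i) \<le> m" unfolding m_def by simp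
    qed
    moreover have "(\<Sum>j\<in>P - D. \<Sum>i\<in>C. E j i) \<le> (\<Sum>j\<in>P - D. K)"
      by (rule sum_mono) (auto simp: D_def K_def)
    moreover have "card (P - D) = card P - card D" using DP finD by (simp add: card_Diff_subset)
    ultimately show ?thesis by simp
  qed
  have dle: "card D \<le> card P" using DP finP card_mono by blast
  have mge: "m \<ge> a" using Ccard unfolding m_def a_def .
  have "real m * real a \<le> real (card D) * real m + (real (card P) - real (card D)) * real K"
  proof -
    have "m * a \<le> card D * m + (card P - card D) * K" using lower upper by linarith
    hence "real (m * a) \<le> real (card D * m + (card P - card D) * K)" by linarith
    thus ?thesis using dle by (simp add: of_nat_diff)
  qed
  moreover have "real (card P) = real a + real t" unfolding a_def using cardP hn by simp
  moreover have "5 * real K \<le> real t" unfolding K_def by linarith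
  moreover have "real t \<le> real a" unfolding a_def using hn by simp
  ultimately have "real (card D) \<ge> real a - real t / 4"
    using mge by (intro arith_core[where m="real m" and B="real (card P)" and K="real K"]) auto
  moreover have "real a = real n - 2 * real t - 1" unfolding a_def using hn by simp
  ultimately show ?thesis unfolding D_def P_def by simp
qed

end
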